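(* Let $\mathcal{L}=(\mathrm{Fm},\vdash)$ be a logic and $N\subseteq\mathrm{Fm}\times\mathrm{Fm}$ a normative system, and let $P^c_N=(\mathrm{Fm}\times\mathrm{Fm})\setminus P_N$. 1. If $\bot_P$ and $\top_W$ hold, $P^c_N$ is closed under $(\top)^{\rhd}$ iff $(\top,\psi)\in N$ for some $\psi\in\mathrm{Fm}$. 2. If $\bot_P$ and $\top_W$ hold and $N$ is closed under (WO), then $N$ is closed under $(\top)$ iff $P^c_N$ is closed under $(\top)^{\rhd}$. 3. If $\bot_P$ and $\top_W$ hold, $P^c_N$ is closed under $(\bot)^{\rhd}$ iff $(\bot,\psi)\in N$ for some $\psi$ with $Cn(\psi)=\mathrm{Fm}$. 4. If $\bot_P$ and $\top_W$ hold and $N$ is closed under (WO), then $N$ is closed under $(\bot)$ iff $P^c_N$ is closed under $(\bot)^{\rhd}$. 5. $P^c_N$ is closed under $(\mathrm{WO})^{\rhd}$. 6. If $N$ is closed under (SI), then $P^c_N$ is closed under $(\mathrm{SI})^{\rhd}$. 7. If $\bot_P,\top_P,\neg_I,\neg_A,\neg_P$ hold and $N$ is closed under (WO), then $N$ is closed under (SI) iff $P^c_N$ is closed under $(\mathrm{SI})^{\rhd}$. 8. If $\wedge_P$ and $\vee_S$ hold and $N$ is closed under (AND), then $P^c_N$ is closed under $(\mathrm{AND})^{\rhd}$. 9. If $\bot_P,\top_P,\neg_I,\neg_A,\neg_P$ hold and $N$ is closed under (WO), then $N$ is closed under (AND) iff $P^c_N$ is closed under $(\mathrm{AND})^{\rhd}$.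 10. If $\vee_S$ holds and $N$ is closed under (OR) and (WO), then $P^c_N$ is closed under $(\mathrm{OR})^{\rhd}$. 11. If $\bot_P,\top_P,\neg_I,\neg_A,\neg_P$ hold and $N$ is closed under (WO), then $N$ is closed under (OR) iff $P^c_N$ is closed under $(\mathrm{OR})^{\rhd}$. 12. If $N$ is closed under (CT), then $P^c_N$ is closed under $(\mathrm{CT})^{\rhd}$. 13. If $\bot_P,\top_P,\neg_I,\neg_A,\neg_P$ hold and $N$ is closed under (WO), then $N$ is closed under (CT) iff $P^c_N$ is closed under $(\mathrm{CT})^{\rhd}$.
   Context: A logic $\mathcal{L}=(\mathrm{Fm},\vdash)$: $\mathrm{Fm}$ a formula algebra, $\vdash\subseteq\mathcal{P}(\mathrm{Fm})\times\mathrm{Fm}$ a consequence relation (reflexive, monotone, cut); $Cn(\Gamma)=\{\psi\mid\Gamma\vdash\psi\}$, $Cn(\varphi)=Cn(\{\varphi\})$, $Cn(\Gamma,\varphi)=Cn(\Gamma\cup\{\varphi\})$, $Cn(\varphi,\psi)=Cn(\{\varphi,\psi\})$; $\varphi\vdash\psi$ means $\{\varphi\}\vdash\psi$. Metalogical properties (each asserts existence of a term, then denoted by the symbol): $\wedge_P$: $Cn(\varphi\wedge\psi)=Cn(\{\varphi,\psi\})$; $\vee_P$: $Cn(\varphi\vee\psi)=Cn(\varphi)\cap Cn(\psi)$; $\vee_S$: $Cn(\Gamma,\varphi\vee\psi)=Cn(\Gamma,\varphi)\cap Cn(\Gamma,\psi)$ for all $\Gamma$; $\bot_P$: $Cn(\bot)=\mathrm{Fm}$;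 $\top_W$: $\top\in Cn(\varphi)$ for all $\varphi$; $\top_P$: $Cn(\top)=Cn(\varnothing)$; $\neg_W$: unary $\neg$ with $\psi\in Cn(\varphi)\Rightarrow\neg\varphi\in Cn(\neg\psi)$. For a term $\neg$ with $\neg_W$ (asserting the following includes $\neg_W$): $\neg_I$: $Cn(\neg\neg\varphi)=Cn(\varphi)$; $\neg_A$: $Cn(\varphi,\neg\varphi)=\mathrm{Fm}$; $\neg_P$: $\wedge_P$ holds and $\neg\psi\in Cn(\varphi,\neg(\varphi\wedge\psi))$. Standing convention: a rule mentioning $\wedge,\vee,\top,\bot$ is only considered when the logic has the corresponding property ($\wedge_P$, $\vee_P$, $\top_W$, $\bot_P$) with that term. A normative system is $N\subseteq\mathrm{Fm}\times\mathrm{Fm}$. Closure rules for $N$ (closed under a rule = the conclusion belongs to $N$ whenever the premises do): $(\top)$: $(\top,\top)\in N$; $(\bot)$: $(\bot,\bot)\in N$; (SI): $(\alpha,\varphi)\in N,\ \beta\vdash\alpha\Rightarrow(\beta,\varphi)\in N$; (WO): $(\alpha,\varphi)\in N,\ \varphi\vdash\psi\Rightarrow(\alpha,\psi)\in N$; (AND): $(\alpha,\varphi),(\alpha,\psi)\in N\Rightarrow(\alpha,\varphi\wedge\psi)\in N$; (OR): $(\alpha,\varphi),(\beta,\varphi)\in N\Rightarrow(\alpha\vee\beta,\varphi)\in N$; (CT): $(\alpha,\varphi)\in N,(\alpha\wedge\varphi,\psi)\in N\Rightarrow(\alpha,\psi)\in N$. $P_N=\{(\alpha,\varphi)\mid\forall\psi((\alpha,\psi)\in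 N\Rightarrow Cn(\varphi,\psi)\neq\mathrm{Fm})\}$. Closure rules for a relation $R\subseteq\mathrm{Fm}\times\mathrm{Fm}$ (here $R=P^c_N$): $(\top)^{\rhd}$: $(\top,\bot)\in R$; $(\bot)^{\rhd}$: $(\bot,\top)\in R$; $(\mathrm{SI})^{\rhd}$: $(\beta,\varphi)\in R,\ \alpha\vdash\beta\Rightarrow(\alpha,\varphi)\in R$; $(\mathrm{WO})^{\rhd}$: $(\alpha,\psi)\in R,\ \varphi\vdash\psi\Rightarrow(\alpha,\varphi)\in R$; $(\mathrm{AND})^{\rhd}$: $(\alpha,\varphi),(\alpha,\psi)\in R\Rightarrow(\alpha,\varphi\vee\psi)\in R$; $(\mathrm{OR})^{\rhd}$: $(\alpha,\varphi),(\beta,\varphi)\in R\Rightarrow(\alpha\vee\beta,\varphi)\in R$; $(\mathrm{CT})^{\rhd}$: $(\alpha,\varphi)\in N,\ (\alpha\wedge\varphi,\psi)\in R\Rightarrow(\alpha,\psi)\in R$. *)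

theory Defs
  imports Main
begin

definition consequence_relation :: "('f set \<Rightarrow> 'f \<Rightarrow> bool) \<Rightarrow> bool" where
  "consequence_relation vd \<longleftrightarrow>
     (\<forall>\<Gamma> \<phi>. \<phi> \<in> \<Gamma> \<longrightarrow> vd \<Gamma> \<phi>) \<and>
     (\<forall>\<Gamma> \<Delta> \<phi>. vd \<Gamma> \<phi> \<and> \<Gamma> \<subseteq> \<Delta> \<longrightarrow> vd \<Delta> \<phi>) \<and>
     (\<forall>\<Gamma> \<Delta> \<phi>. (\<forall>\<psi>\<in>\<Delta>. vd \<Gamma> \<psi>) \<and> vd \<Delta> \<phi> \<longrightarrow> vd \<Gamma> \<phi>)"

definition Cn :: "('f set \<Rightarrow> 'f \<Rightarrow> bool) \<Rightarrow> 'f set \<Rightarrow> 'f set" where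
  "Cn vd \<Gamma> = {\<psi>. vd \<Gamma> \<psi>}"

definition conj_P :: "('f set \<Rightarrow> 'f \<Rightarrow> bool) \<Rightarrow> ('f \<Rightarrow> 'f \<Rightarrow> 'f) \<Rightarrow> bool" where
  "conj_P vd c \<longleftrightarrow> (\<forall>\<phi> \<psi>. Cn vd {c \<phi> \<psi>} = Cn vd {\<phi>, \<psi>})"

definition disj_P :: "('f set \<Rightarrow> 'f \<Rightarrow> bool) \<Rightarrow> ('f \<Rightarrow> 'f \<Rightarrow> 'f) \<Rightarrow> bool" where
  "disj_P vd d \<longleftrightarrow> (\<forall>\<phi> \<psi>. Cn vd {d \<phi> \<psi>} = Cn vd {\<phi>} \<inter> Cn vd {\<psi>})"

definition disj_S :: "('f set \<Rightarrow> 'f \<Rightarrow> bool) \<Rightarrow> ('f \<Rightarrow> 'f \<Rightarrow> 'f) \<Rightarrow> bool" where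
  "disj_S vd d \<longleftrightarrow>
     (\<forall>\<Gamma> \<phi> \<psi>. Cn vd (\<Gamma> \<union> {d \<phi> \<psi>}) = Cn vd (\<Gamma> \<union> {\<phi>}) \<inter> Cn vd (\<Gamma> \<union> {\<psi>}))"

definition bot_P :: "('f set \<Rightarrow> 'f \<Rightarrow> bool) \<Rightarrow> 'f \<Rightarrow> bool" where
  "bot_P vd b \<longleftrightarrow> Cn vd {b} = UNIV"

definition top_W :: "('f set \<Rightarrow> 'f \<Rightarrow> bool) \<Rightarrow> 'f \<Rightarrow> bool" where
  "top_W vd t \<longleftrightarrow> (\<forall>\<phi>. t \<in> Cn vd {\<phi>})"

definition top_P :: "('f set \<Rightarrow> 'f \<Rightarrow> bool) \<Rightarrow> 'f \<Rightarrow> bool" where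
  "top_P vd t \<longleftrightarrow> Cn vd {t} = Cn vd {}"

definition neg_W :: "('f set \<Rightarrow> 'f \<Rightarrow> bool) \<Rightarrow> ('f \<Rightarrow> 'f) \<Rightarrow> bool" where
  "neg_W vd n \<longleftrightarrow> (\<forall>\<phi> \<psi>. \<psi> \<in> Cn vd {\<phi>} \<longrightarrow> n \<phi> \<in> Cn vd {n \<psi>})"

definition neg_I :: "('f set \<Rightarrow> 'f \<Rightarrow> bool) \<Rightarrow> ('f \<Rightarrow> 'f) \<Rightarrow> bool" where
  "neg_I vd n \<longleftrightarrow> neg_W vd n \<and> (\<forall>\<phi>. Cn vd {n (n \<phi>)} = Cn vd {\<phi>})"

definition neg_A :: "('f set \<Rightarrow> 'f \<Rightarrow> bool) \<Rightarrow> ('f \<Rightarrow> 'f) \<Rightarrow> bool" where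
  "neg_A vd n \<longleftrightarrow> neg_W vd n \<and> (\<forall>\<phi>. Cn vd {\<phi>, n \<phi>} = UNIV)"

definition neg_P :: "('f set \<Rightarrow> 'f \<Rightarrow> bool) \<Rightarrow> ('f \<Rightarrow> 'f) \<Rightarrow> ('f \<Rightarrow> 'f \<Rightarrow> 'f) \<Rightarrow> bool" where
  "neg_P vd n c \<longleftrightarrow> neg_W vd n \<and> conj_P vd c \<and>
     (\<forall>\<phi> \<psi>. n \<psi> \<in> Cn vd {\<phi>, n (c \<phi> \<psi>)})"

definition P_N :: "('f set \<Rightarrow> 'f \<Rightarrow> bool) \<Rightarrow> ('f \<times> 'f) set \<Rightarrow> ('f \<times> 'f) set" where
  "P_N vd N = {(\<alpha>, \<phi>). \<forall>\<psi>. (\<alpha>, \<psi>) \<in> N \<longrightarrow> Cn vd {\<phi>, \<psi>} \<noteq> UNIV}"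

definition Pc_N :: "('f set \<Rightarrow> 'f \<Rightarrow> bool) \<Rightarrow> ('f \<times> 'f) set \<Rightarrow> ('f \<times> 'f) set" where
  "Pc_N vd N = UNIV - P_N vd N"

definition closed_top :: "('f \<times> 'f) set \<Rightarrow> 'f \<Rightarrow> bool" where
  "closed_top N t \<longleftrightarrow> (t, t) \<in> N"

definition closed_bot :: "('f \<times> 'f) set \<Rightarrow> 'f \<Rightarrow> bool" where
  "closed_bot N b \<longleftrightarrow> (b, b) \<in> N"

definition closed_SI :: "('f set \<Rightarrow> 'f \<Rightarrow> bool) \<Rightarrow> ('f \<times> 'f) set \<Rightarrow> bool" where
  "closed_SI vd N \<longleftrightarrow> (\<forall>\<alpha> \<beta> \<phi>. (\<alpha>, \<phi>) \<in> N \<and> vd {\<beta>} \<alpha> \<longrightarrow> (\<beta>, \<phi>) \<in> N)"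

definition closed_WO :: "('f set \<Rightarrow> 'f \<Rightarrow> bool) \<Rightarrow> ('f \<times> 'f) set \<Rightarrow> bool" where
  "closed_WO vd N \<longleftrightarrow> (\<forall>\<alpha> \<phi> \<psi>. (\<alpha>, \<phi>) \<in> N \<and> vd {\<phi>} \<psi> \<longrightarrow> (\<alpha>, \<psi>) \<in> N)"

definition closed_AND :: "('f \<times> 'f) set \<Rightarrow> ('f \<Rightarrow> 'f \<Rightarrow> 'f) \<Rightarrow> bool" where
  "closed_AND N c \<longleftrightarrow> (\<forall>\<alpha> \<phi> \<psi>. (\<alpha>, \<phi>) \<in> N \<and> (\<alpha>, \<psi>) \<in> N \<longrightarrow> (\<alpha>, c \<phi> \<psi>) \<in> N)"

definition closed_OR :: "('f \<times> 'f) set \<Rightarrow> ('f \<Rightarrow> 'f \<Rightarrow> 'f) \<Rightarrow> bool" where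
  "closed_OR N d \<longleftrightarrow> (\<forall>\<alpha> \<beta> \<phi>. (\<alpha>, \<phi>) \<in> N \<and> (\<beta>, \<phi>) \<in> N \<longrightarrow> (d \<alpha> \<beta>, \<phi>) \<in> N)"

definition closed_CT :: "('f \<times> 'f) set \<Rightarrow> ('f \<Rightarrow> 'f \<Rightarrow> 'f) \<Rightarrow> bool" where
  "closed_CT N c \<longleftrightarrow> (\<forall>\<alpha> \<phi> \<psi>. (\<alpha>, \<phi>) \<in> N \<and> (c \<alpha> \<phi>, \<psi>) \<in> N \<longrightarrow> (\<alpha>, \<psi>) \<in> N)"

definition closed_top_d :: "('f \<times> 'f) set \<Rightarrow> 'f \<Rightarrow> 'f \<Rightarrow> bool" where
  "closed_top_d R t b \<longleftrightarrow> (t, b) \<in> R"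

definition closed_bot_d :: "('f \<times> 'f) set \<Rightarrow> 'f \<Rightarrow> 'f \<Rightarrow> bool" where
  "closed_bot_d R b t \<longleftrightarrow> (b, t) \<in> R"

definition closed_SI_d :: "('f set \<Rightarrow> 'f \<Rightarrow> bool) \<Rightarrow> ('f \<times> 'f) set \<Rightarrow> bool" where
  "closed_SI_d vd R \<longleftrightarrow> (\<forall>\<alpha> \<beta> \<phi>. (\<beta>, \<phi>) \<in> R \<and> vd {\<alpha>} \<beta> \<longrightarrow> (\<alpha>, \<phi>) \<in> R)"

definition closed_WO_d :: "('f set \<Rightarrow> 'f \<Rightarrow> bool) \<Rightarrow> ('f \<times> 'f) set \<Rightarrow> bool" where
  "closed_WO_d vd R \<longleftrightarrow> (\<forall>\<alpha> \<phi> \<psi>. (\<alpha>, \<psi>) \<in> R \<and> vd {\<phi>} \<psi> \<longrightarrow> (\<alpha>, \<phi>) \<in> R)"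

definition closed_AND_d :: "('f \<times> 'f) set \<Rightarrow> ('f \<Rightarrow> 'f \<Rightarrow> 'f) \<Rightarrow> bool" where
  "closed_AND_d R d \<longleftrightarrow> (\<forall>\<alpha> \<phi> \<psi>. (\<alpha>, \<phi>) \<in> R \<and> (\<alpha>, \<psi>) \<in> R \<longrightarrow> (\<alpha>, d \<phi> \<psi>) \<in> R)"

definition closed_OR_d :: "('f \<times> 'f) set \<Rightarrow> ('f \<Rightarrow> 'f \<Rightarrow> 'f) \<Rightarrow> bool" where
  "closed_OR_d R d \<longleftrightarrow> (\<forall>\<alpha> \<beta> \<phi>. (\<alpha>, \<phi>) \<in> R \<and> (\<beta>, \<phi>) \<in> R \<longrightarrow> (d \<alpha> \<beta>, \<phi>) \<in> R)"

definition closed_CT_d :: "('f \<times> 'f) set \<Rightarrow> ('f \<times> 'f) set \<Rightarrow> ('f \<Rightarrow> 'f \<Rightarrow> 'f) \<Rightarrow> bool" where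
  "closed_CT_d N R c \<longleftrightarrow> (\<forall>\<alpha> \<phi> \<psi>. (\<alpha>, \<phi>) \<in> N \<and> (c \<alpha> \<phi>, \<psi>) \<in> R \<longrightarrow> (\<alpha>, \<psi>) \<in> R)"

end

theory Submission
  imports Defs
begin

lemma cr_refl: "consequence_relation vd \<Longrightarrow> \<phi> \<in> \<Gamma> \<Longrightarrow> vd \<Gamma> \<phi>"
  unfolding consequence_relation_def by blast
lemma cr_mono: "consequence_relation vd \<Longrightarrow> vd \<Gamma> \<phi> \<Longrightarrow> \<Gamma> \<subseteq> \<Delta> \<Longrightarrow> vd \<Delta> \<phi>"
  unfolding consequence_relation_def by blast
lemma cr_cut: "consequence_relation vd \<Longrightarrow> (\<forall>\<psi>\<in>\<Delta>. vd \<Gamma> \<psi>) \<Longrightarrow> vd \<Delta> \<phi> \<Longrightarrow> vd \<Gamma> \<phi>"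
  unfolding consequence_relation_def by blast
lemma cr_cut1: assumes "consequence_relation vd" "vd \<Gamma> a" "vd (insert a \<Gamma>) \<phi>" shows "vd \<Gamma> \<phi>"
proof -
  have "\<forall>\<psi>\<in>insert a \<Gamma>. vd \<Gamma> \<psi>" using assms cr_refl[OF assms(1)] by blast
  then show ?thesis using cr_cut[OF assms(1)] assms(3) by blast
qed
lemma cr_trans: assumes "consequence_relation vd" "vd {a} b" "vd {b} c" shows "vd {a} c"
proof -
  have "vd {b, a} c" using cr_mono[OF assms(1) assms(3)] by blast
  then show ?thesis using cr_cut1[OF assms(1) assms(2)] by blast
qed
lemma cn_univ: "(Cn vd S = UNIV) = (\<forall>x. vd S x)"
  unfolding Cn_def by auto
lemma Pc_iff: "((a, p) \<in> Pc_N vd N) = (\<exists>c. (a, c) \<in> N \<and> (\<forall>x. vd {p, c} x))"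
  unfolding Pc_N_def P_N_def Cn_def by auto

lemma nn1: assumes "neg_I vd n" "consequence_relation vd" shows "vd {p} (n (n p))"
proof -
  have "n (n p) \<in> Cn vd {n (n p)}" using cr_refl[OF assms(2)] by (simp add: Cn_def)
  then show ?thesis using assms(1) unfolding neg_I_def Cn_def by auto
qed
lemma nn2: assumes "neg_I vd n" "consequence_relation vd" shows "vd {n (n p)} p"
proof -
  have "p \<in> Cn vd {p}" using cr_refl[OF assms(2)] by (simp add: Cn_def)
  moreover have "Cn vd {n (n p)} = Cn vd {p}" using assms(1) unfolding neg_I_def by blast
  ultimately show ?thesis unfolding Cn_def by blast
qed

lemma key1: assumes cr: "consequence_relation vd" and np: "neg_P vd n c" and tp: "top_P vd t"
  and ni: "neg_I vd n" and h: "\<forall>x. vd {a, b} x" shows "vd {a} (n b)"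
proof -
  have cp: "conj_P vd c" and nw: "neg_W vd n" using np unfolding neg_P_def by auto
  have "Cn vd {c a b} = Cn vd {a, b}" using cp unfolding conj_P_def by blast
  then have "vd {c a b} (n t)" using h by (simp add: Cn_def set_eq_iff)
  then have "n (c a b) \<in> Cn vd {n (n t)}" using nw unfolding neg_W_def Cn_def by blast
  also have "Cn vd {n (n t)} = Cn vd {}" using ni tp unfolding neg_I_def top_P_def by simp
  finally have "vd {} (n (c a b))" by (simp add: Cn_def)
  then have 1: "vd {a} (n (c a b))" using cr_mono[OF cr] by blast
  have "vd {a, n (c a b)} (n b)" using np unfolding neg_P_def Cn_def by blast
  then have "vd (insert (n (c a b)) {a}) (n b)" by (simp add: insert_commute)
  then show ?thesis using cr_cut1[OF cr 1] by blast
qed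

lemma key2: assumes cr: "consequence_relation vd" and na: "neg_A vd n" and h: "vd {a} (n b)"
  shows "vd {a, b} x"
proof -
  have "vd {b, n b} x" using na unfolding neg_A_def by (simp add: cn_univ)
  then have 1: "vd (insert (n b) {a, b}) x" using cr_mono[OF cr] by (metis insert_commute subset_insertI insert_mono empty_subsetI)
  have "vd {a, b} (n b)" using cr_mono[OF cr h] by blast
  then show ?thesis using cr_cut1[OF cr _ 1] by blast
qed

lemma Pc_neg: assumes cr: "consequence_relation vd" and np: "neg_P vd n c" and tp: "top_P vd t"
  and ni: "neg_I vd n" and na: "neg_A vd n" and wo: "closed_WO vd N"
  shows "((a, p) \<in> Pc_N vd N) = ((a, n p) \<in> N)"
proof
  assume "(a, p) \<in> Pc_N vd N"
  then obtain d where d: "(a, d) \<in> N" "\<forall>x. vd {p, d} x" by (auto simp: Pc_iff)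
  then have "\<forall>x. vd {d, p} x" by (simp add: insert_commute)
  then have "vd {d} (n p)" using key1[OF cr np tp ni] by blast
  then show "(a, n p) \<in> N" using wo d unfolding closed_WO_def by blast
next
  assume h: "(a, n p) \<in> N"
  have "\<forall>x. vd {n p, p} x" using key2[OF cr na] cr_refl[OF cr] by blast
  then have "\<forall>x. vd {p, n p} x" by (simp add: insert_commute)
  then show "(a, p) \<in> Pc_N vd N" using h by (auto simp: Pc_iff)
qed

lemma N_nn: assumes cr: "consequence_relation vd" and ni: "neg_I vd n" and wo: "closed_WO vd N"
  shows "((a, n (n p)) \<in> N) = ((a, p) \<in> N)"
  using wo nn1[OF ni cr] nn2[OF ni cr] unfolding closed_WO_def by blast


lemma p1: assumes cr: "consequence_relation vd" and "bot_P vd bb"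
  shows "closed_top_d (Pc_N vd N) tt bb \<longleftrightarrow> (\<exists>\<psi>. (tt, \<psi>) \<in> N)"
proof -
  have "\<And>\<psi> x. vd {bb, \<psi>} x" using assms(2) cr_mono[OF cr] unfolding bot_P_def cn_univ by blast
  then show ?thesis unfolding closed_top_d_def Pc_iff by blast
qed

lemma p2: assumes cr: "consequence_relation vd" and "bot_P vd bb" "top_W vd tt" "closed_WO vd N"
  shows "closed_top N tt \<longleftrightarrow> closed_top_d (Pc_N vd N) tt bb"
proof -
  have "(\<exists>\<psi>. (tt, \<psi>) \<in> N) \<longleftrightarrow> (tt, tt) \<in> N"
  proof
    assume "\<exists>\<psi>. (tt, \<psi>) \<in> N"
    then obtain \<psi> where "(tt, \<psi>) \<in> N" by blast
    moreover have "vd {\<psi>} tt" using assms(3) unfolding top_W_def Cn_def by blast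
    ultimately show "(tt, tt) \<in> N" using assms(4) unfolding closed_WO_def by blast
  qed blast
  then show ?thesis using p1[OF cr assms(2)] unfolding closed_top_def by simp
qed

lemma p3: assumes cr: "consequence_relation vd" and "top_W vd tt"
  shows "closed_bot_d (Pc_N vd N) bb tt \<longleftrightarrow> (\<exists>\<psi>. (bb, \<psi>) \<in> N \<and> Cn vd {\<psi>} = UNIV)"
proof -
  have "\<And>\<psi> x. vd {tt, \<psi>} x = vd {\<psi>} x"
  proof -
    fix \<psi> x
    have t: "vd {\<psi>} tt" using assms(2) unfolding top_W_def Cn_def by blast
    show "vd {tt, \<psi>} x = vd {\<psi>} x" using cr_cut1[OF cr t, of x] cr_mono[OF cr, of "{\<psi>}" x "{tt, \<psi>}"] by auto
  qed
  then show ?thesis unfolding closed_bot_d_def Pc_iff cn_univ by auto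
qed

lemma p4: assumes cr: "consequence_relation vd" and "bot_P vd bb" "top_W vd tt" "closed_WO vd N"
  shows "closed_bot N bb \<longleftrightarrow> closed_bot_d (Pc_N vd N) bb tt"
proof -
  have "(\<exists>\<psi>. (bb, \<psi>) \<in> N \<and> Cn vd {\<psi>} = UNIV) \<longleftrightarrow> (bb, bb) \<in> N"
  proof
    assume "\<exists>\<psi>. (bb, \<psi>) \<in> N \<and> Cn vd {\<psi>} = UNIV"
    then obtain \<psi> where "(bb, \<psi>) \<in> N" "Cn vd {\<psi>} = UNIV" by blast
    moreover have "vd {\<psi>} bb" using \<open>Cn vd {\<psi>} = UNIV\<close> unfolding cn_univ by blast
    ultimately show "(bb, bb) \<in> N" using assms(4) unfolding closed_WO_def by blast
  next
    assume "(bb, bb) \<in> N" then show "\<exists>\<psi>. (bb, \<psi>) \<in> N \<and> Cn vd {\<psi>} = UNIV"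
      using assms(2) unfolding bot_P_def by blast
  qed
  then show ?thesis using p3[OF cr assms(3)] unfolding closed_bot_def by simp
qed

lemma p5: assumes cr: "consequence_relation vd" shows "closed_WO_d vd (Pc_N vd N)"
  unfolding closed_WO_d_def
proof (intro allI impI)
  fix a p q assume h: "(a, q) \<in> Pc_N vd N \<and> vd {p} q"
  then obtain d where d: "(a, d) \<in> N" "\<forall>x. vd {q, d} x" by (auto simp: Pc_iff)
  have "\<forall>x. vd {p, d} x"
  proof
    fix x
    have 1: "vd {p, d} q" by (rule cr_mono[OF cr, of "{p}" q]) (use h in auto)
    have "vd (insert q {p, d}) x" by (rule cr_mono[OF cr, of "{q,d}" x]) (use d in auto)
    then show "vd {p, d} x" using cr_cut1[OF cr 1] by blast
  qed
  then show "(a, p) \<in> Pc_N vd N" using d by (auto simp: Pc_iff)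
qed

lemma p6: "closed_SI vd N \<Longrightarrow> closed_SI_d vd (Pc_N vd N)"
  unfolding closed_SI_def closed_SI_d_def Pc_iff by blast

lemma p7: assumes cr: "consequence_relation vd" and tp: "top_P vd tt" and ni: "neg_I vd neg"
  and na: "neg_A vd neg" and np: "neg_P vd neg cj" and wo: "closed_WO vd N"
  shows "closed_SI vd N \<longleftrightarrow> closed_SI_d vd (Pc_N vd N)"
proof
  assume "closed_SI vd N" then show "closed_SI_d vd (Pc_N vd N)" by (rule p6)
next
  assume h: "closed_SI_d vd (Pc_N vd N)"
  show "closed_SI vd N" unfolding closed_SI_def
  proof (intro allI impI)
    fix a b p assume "(a, p) \<in> N \<and> vd {b} a"
    then have 1: "(a, neg p) \<in> Pc_N vd N" and 2: "vd {b} a"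
      by (simp_all add: Pc_neg[OF cr np tp ni na wo] N_nn[OF cr ni wo])
    have "(b, neg p) \<in> Pc_N vd N" using h 1 2 unfolding closed_SI_d_def by blast
    then show "(b, p) \<in> N" by (simp add: Pc_neg[OF cr np tp ni na wo] N_nn[OF cr ni wo])
  qed
qed

lemma p8: assumes cr: "consequence_relation vd" and cp: "conj_P vd cj" and ds: "disj_S vd dj"
  and an: "closed_AND N cj" shows "closed_AND_d (Pc_N vd N) dj"
  unfolding closed_AND_d_def
proof (intro allI impI)
  fix a p q assume "(a, p) \<in> Pc_N vd N \<and> (a, q) \<in> Pc_N vd N"
  then obtain d1 d2 where d: "(a, d1) \<in> N" "\<forall>x. vd {p, d1} x" "(a, d2) \<in> N" "\<forall>x. vd {q, d2} x"
    by (auto simp: Pc_iff)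
  let ?c = "cj d1 d2"
  have cN: "(a, ?c) \<in> N" using an d unfolding closed_AND_def by blast
  have cC: "Cn vd {?c} = Cn vd {d1, d2}" using cp unfolding conj_P_def by blast
  have "d1 \<in> Cn vd {d1, d2}" "d2 \<in> Cn vd {d1, d2}" by (simp_all add: Cn_def cr_refl[OF cr])
  then have c1: "vd {?c} d1" "vd {?c} d2" unfolding cC[symmetric] by (simp_all add: Cn_def)
  have A: "vd {?c, p} x" for x
  proof -
    have 1: "vd {?c, p} d1" using cr_mono[OF cr c1(1)] by blast
    have "vd (insert d1 {?c, p}) x" by (rule cr_mono[OF cr, of "{p,d1}" x]) (use d in auto)
    then show ?thesis using cr_cut1[OF cr 1] by blast
  qed
  have B: "vd {?c, q} x" for x
  proof -
    have 1: "vd {?c, q} d2" using cr_mono[OF cr c1(2)] by blast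
    have "vd (insert d2 {?c, q}) x" by (rule cr_mono[OF cr, of "{q,d2}" x]) (use d in auto)
    then show ?thesis using cr_cut1[OF cr 1] by blast
  qed
  have "Cn vd ({?c} \<union> {dj p q}) = Cn vd ({?c} \<union> {p}) \<inter> Cn vd ({?c} \<union> {q})"
    using ds[unfolded disj_S_def, rule_format, of "{?c}" p q] .
  then have "x \<in> Cn vd ({?c} \<union> {dj p q})" for x using A B by (simp add: Cn_def insert_commute)
  then have "vd {dj p q, ?c} x" for x by (simp add: Cn_def insert_commute)
  then show "(a, dj p q) \<in> Pc_N vd N" using cN by (auto simp: Pc_iff)
qed

lemma disjP_intro: assumes "disj_P vd d" "consequence_relation vd"
  shows "vd {p} (d p q)" "vd {q} (d p q)"
proof -
  have "d p q \<in> Cn vd {d p q}" using cr_refl[OF assms(2)] by (simp add: Cn_def)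
  then show "vd {p} (d p q)" "vd {q} (d p q)" using assms(1) unfolding disj_P_def Cn_def by blast+
qed

lemma p9: assumes cr: "consequence_relation vd" and tp: "top_P vd tt" and ni: "neg_I vd neg"
  and na: "neg_A vd neg" and np: "neg_P vd neg cj" and dp: "disj_P vd dj" and wo: "closed_WO vd N"
  shows "closed_AND N cj \<longleftrightarrow> closed_AND_d (Pc_N vd N) dj"
proof -
  have cp: "conj_P vd cj" and nw: "neg_W vd neg" using np unfolding neg_P_def by auto
  have cC: "Cn vd {cj p q} = Cn vd {p, q}" for p q using cp unfolding conj_P_def by blast
  have F: "vd {cj (neg p) (neg q)} (neg (dj p q))" for p q
  proof -
    let ?c = "cj (neg p) (neg q)"
    have "neg p \<in> Cn vd {neg p, neg q}" "neg q \<in> Cn vd {neg p, neg q}" by (simp_all add: Cn_def cr_refl[OF cr])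
    then have c1: "vd {?c} (neg p)" "vd {?c} (neg q)" unfolding cC[symmetric] by (simp_all add: Cn_def)
    have "\<forall>x. vd {?c, p} x" using key2[OF cr na c1(1)] by blast
    then have "vd {p} (neg ?c)" using key1[OF cr np tp ni] by (simp add: insert_commute)
    moreover have "\<forall>x. vd {?c, q} x" using key2[OF cr na c1(2)] by blast
    then have "vd {q} (neg ?c)" using key1[OF cr np tp ni] by (simp add: insert_commute)
    ultimately have "neg ?c \<in> Cn vd {dj p q}" using dp unfolding disj_P_def Cn_def by blast
    then have "vd {neg (neg ?c)} (neg (dj p q))" using nw unfolding neg_W_def Cn_def by blast
    then show ?thesis using cr_trans[OF cr nn1[OF ni cr]] by blast
  qed
  have G: "vd {neg (dj (neg p) (neg q))} (cj p q)" for p q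
  proof -
    let ?x = "neg (dj (neg p) (neg q))"
    have "vd {?x} (neg (neg p))" using nw disjP_intro(1)[OF dp cr, of "neg p" "neg q"] unfolding neg_W_def Cn_def by blast
    then have 1: "vd {?x} p" using cr_trans[OF cr _ nn2[OF ni cr]] by blast
    have "vd {?x} (neg (neg q))" using nw disjP_intro(2)[OF dp cr, of "neg q" "neg p"] unfolding neg_W_def Cn_def by blast
    then have 2: "vd {?x} q" using cr_trans[OF cr _ nn2[OF ni cr]] by blast
    have "cj p q \<in> Cn vd {cj p q}" by (simp add: Cn_def cr_refl[OF cr])
    then have "vd {p, q} (cj p q)" unfolding cC by (simp add: Cn_def)
    then have "vd {?x, p, q} (cj p q)" using cr_mono[OF cr] by blast
    then have "vd {?x, p} (cj p q)" using cr_cut1[OF cr cr_mono[OF cr 2]] by (simp add: insert_commute)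
    then show ?thesis using cr_cut1[OF cr 1] by (simp add: insert_commute)
  qed
  show ?thesis
  proof
    assume an: "closed_AND N cj"
    show "closed_AND_d (Pc_N vd N) dj" unfolding closed_AND_d_def
    proof (intro allI impI)
      fix a p q assume "(a, p) \<in> Pc_N vd N \<and> (a, q) \<in> Pc_N vd N"
      then have "(a, neg p) \<in> N" "(a, neg q) \<in> N" by (simp_all add: Pc_neg[OF cr np tp ni na wo])
      then have "(a, cj (neg p) (neg q)) \<in> N" using an unfolding closed_AND_def by blast
      then have "(a, neg (dj p q)) \<in> N" using wo F unfolding closed_WO_def by blast
      then show "(a, dj p q) \<in> Pc_N vd N" by (simp add: Pc_neg[OF cr np tp ni na wo])
    qed
  next
    assume ad: "closed_AND_d (Pc_N vd N) dj"
    show "closed_AND N cj" unfolding closed_AND_def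
    proof (intro allI impI)
      fix a p q assume "(a, p) \<in> N \<and> (a, q) \<in> N"
      then have "(a, neg p) \<in> Pc_N vd N" "(a, neg q) \<in> Pc_N vd N"
        by (simp_all add: Pc_neg[OF cr np tp ni na wo] N_nn[OF cr ni wo])
      then have "(a, dj (neg p) (neg q)) \<in> Pc_N vd N" using ad unfolding closed_AND_d_def by blast
      then have "(a, neg (dj (neg p) (neg q))) \<in> N" by (simp add: Pc_neg[OF cr np tp ni na wo])
      then show "(a, cj p q) \<in> N" using wo G unfolding closed_WO_def by blast
    qed
  qed
qed

lemma p10: assumes cr: "consequence_relation vd" and ds: "disj_S vd dj"
  and orr: "closed_OR N dj" and wo: "closed_WO vd N" shows "closed_OR_d (Pc_N vd N) dj"
  unfolding closed_OR_d_def
proof (intro allI impI)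
  fix a b p assume "(a, p) \<in> Pc_N vd N \<and> (b, p) \<in> Pc_N vd N"
  then obtain d1 d2 where d: "(a, d1) \<in> N" "\<forall>x. vd {p, d1} x" "(b, d2) \<in> N" "\<forall>x. vd {p, d2} x"
    by (auto simp: Pc_iff)
  have e: "Cn vd ({} \<union> {dj d1 d2}) = Cn vd ({} \<union> {d1}) \<inter> Cn vd ({} \<union> {d2})"
    using ds[unfolded disj_S_def, rule_format, of "{}" d1 d2] .
  have "dj d1 d2 \<in> Cn vd {dj d1 d2}" using cr_refl[OF cr] by (simp add: Cn_def)
  then have "vd {d1} (dj d1 d2)" "vd {d2} (dj d1 d2)" using e by (auto simp: Cn_def)
  then have "(a, dj d1 d2) \<in> N" "(b, dj d1 d2) \<in> N" using wo d unfolding closed_WO_def by blast+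
  then have N: "(dj a b, dj d1 d2) \<in> N" using orr unfolding closed_OR_def by blast
  have "Cn vd ({p} \<union> {dj d1 d2}) = Cn vd ({p} \<union> {d1}) \<inter> Cn vd ({p} \<union> {d2})"
    using ds[unfolded disj_S_def, rule_format, of "{p}" d1 d2] .
  then have "vd {p, dj d1 d2} x" for x using d by (auto simp: Cn_def set_eq_iff insert_commute)
  then show "(dj a b, p) \<in> Pc_N vd N" using N by (auto simp: Pc_iff)
qed

lemma p11: assumes cr: "consequence_relation vd" and tp: "top_P vd tt" and ni: "neg_I vd neg"
  and na: "neg_A vd neg" and np: "neg_P vd neg cj" and wo: "closed_WO vd N"
  shows "closed_OR N dj \<longleftrightarrow> closed_OR_d (Pc_N vd N) dj"
proof
  assume h: "closed_OR N dj"
  show "closed_OR_d (Pc_N vd N) dj" unfolding closed_OR_d_def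
  proof (intro allI impI)
    fix a b p assume "(a, p) \<in> Pc_N vd N \<and> (b, p) \<in> Pc_N vd N"
    then have "(a, neg p) \<in> N" "(b, neg p) \<in> N" by (simp_all add: Pc_neg[OF cr np tp ni na wo])
    then have "(dj a b, neg p) \<in> N" using h unfolding closed_OR_def by blast
    then show "(dj a b, p) \<in> Pc_N vd N" by (simp add: Pc_neg[OF cr np tp ni na wo])
  qed
next
  assume h: "closed_OR_d (Pc_N vd N) dj"
  show "closed_OR N dj" unfolding closed_OR_def
  proof (intro allI impI)
    fix a b p assume "(a, p) \<in> N \<and> (b, p) \<in> N"
    then have "(a, neg p) \<in> Pc_N vd N" "(b, neg p) \<in> Pc_N vd N"
      by (simp_all add: Pc_neg[OF cr np tp ni na wo] N_nn[OF cr ni wo])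
    then have "(dj a b, neg p) \<in> Pc_N vd N" using h unfolding closed_OR_d_def by blast
    then show "(dj a b, p) \<in> N" by (simp add: Pc_neg[OF cr np tp ni na wo] N_nn[OF cr ni wo])
  qed
qed

lemma p12: "closed_CT N cj \<Longrightarrow> closed_CT_d N (Pc_N vd N) cj"
  unfolding closed_CT_def closed_CT_d_def Pc_iff by blast

lemma p13: assumes cr: "consequence_relation vd" and tp: "top_P vd tt" and ni: "neg_I vd neg"
  and na: "neg_A vd neg" and np: "neg_P vd neg cj" and wo: "closed_WO vd N"
  shows "closed_CT N cj \<longleftrightarrow> closed_CT_d N (Pc_N vd N) cj"
proof
  assume "closed_CT N cj" then show "closed_CT_d N (Pc_N vd N) cj" by (rule p12)
next
  assume h: "closed_CT_d N (Pc_N vd N) cj"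
  show "closed_CT N cj" unfolding closed_CT_def
  proof (intro allI impI)
    fix a p q assume "(a, p) \<in> N \<and> (cj a p, q) \<in> N"
    then have 1: "(a, p) \<in> N" and "(cj a p, neg q) \<in> Pc_N vd N"
      by (simp_all add: Pc_neg[OF cr np tp ni na wo] N_nn[OF cr ni wo])
    then have "(a, neg q) \<in> Pc_N vd N" using h unfolding closed_CT_d_def by blast
    then show "(a, q) \<in> N" by (simp add: Pc_neg[OF cr np tp ni na wo] N_nn[OF cr ni wo])
  qed
qed

theorem proposition4p5:
  fixes vd :: "'f set \<Rightarrow> 'f \<Rightarrow> bool"
    and N :: "('f \<times> 'f) set"
    and top bot :: 'f
    and conj disj :: "'f \<Rightarrow> 'f \<Rightarrow> 'f"
    and neg :: "'f \<Rightarrow> 'f"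
  assumes logic: "consequence_relation vd"
  shows
  \<comment> \<open>1\<close>
  "(bot_P vd bot \<and> top_W vd top \<longrightarrow>
      (closed_top_d (Pc_N vd N) top bot \<longleftrightarrow> (\<exists>\<psi>. (top, \<psi>) \<in> N)))
  \<comment> \<open>2\<close>
   \<and> (bot_P vd bot \<and> top_W vd top \<and> closed_WO vd N \<longrightarrow>
      (closed_top N top \<longleftrightarrow> closed_top_d (Pc_N vd N) top bot))
  \<comment> \<open>3\<close>
   \<and> (bot_P vd bot \<and> top_W vd top \<longrightarrow>
      (closed_bot_d (Pc_N vd N) bot top \<longleftrightarrow> (\<exists>\<psi>. (bot, \<psi>) \<in> N \<and> Cn vd {\<psi>} = UNIV)))
  \<comment> \<open>4\<close>
   \<and> (bot_P vd bot \<and> top_W vd top \<and> closed_WO vd N \<longrightarrow>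
      (closed_bot N bot \<longleftrightarrow> closed_bot_d (Pc_N vd N) bot top))
  \<comment> \<open>5\<close>
   \<and> closed_WO_d vd (Pc_N vd N)
  \<comment> \<open>6\<close>
   \<and> (closed_SI vd N \<longrightarrow> closed_SI_d vd (Pc_N vd N))
  \<comment> \<open>7\<close>
   \<and> (bot_P vd bot \<and> top_P vd top \<and> neg_I vd neg \<and> neg_A vd neg \<and> neg_P vd neg conj
        \<and> closed_WO vd N \<longrightarrow>
      (closed_SI vd N \<longleftrightarrow> closed_SI_d vd (Pc_N vd N)))
  \<comment> \<open>8\<close>
   \<and> (conj_P vd conj \<and> disj_S vd disj \<and> closed_AND N conj \<longrightarrow>
      closed_AND_d (Pc_N vd N) disj)
  \<comment> \<open>9\<close>
   \<and> (bot_P vd bot \<and> top_P vd top \<and> neg_I vd neg \<and> neg_A vd neg \<and> neg_P vd neg conj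
        \<and> disj_P vd disj \<and> closed_WO vd N \<longrightarrow>
      (closed_AND N conj \<longleftrightarrow> closed_AND_d (Pc_N vd N) disj))
  \<comment> \<open>10\<close>
   \<and> (disj_S vd disj \<and> closed_OR N disj \<and> closed_WO vd N \<longrightarrow>
      closed_OR_d (Pc_N vd N) disj)
  \<comment> \<open>11\<close>
   \<and> (bot_P vd bot \<and> top_P vd top \<and> neg_I vd neg \<and> neg_A vd neg \<and> neg_P vd neg conj
        \<and> disj_P vd disj \<and> closed_WO vd N \<longrightarrow>
      (closed_OR N disj \<longleftrightarrow> closed_OR_d (Pc_N vd N) disj))
  \<comment> \<open>12\<close>
   \<and> (conj_P vd conj \<and> closed_CT N conj \<longrightarrow> closed_CT_d N (Pc_N vd N) conj)
  \<comment> \<open>13\<close>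
   \<and> (bot_P vd bot \<and> top_P vd top \<and> neg_I vd neg \<and> neg_A vd neg \<and> neg_P vd neg conj
        \<and> closed_WO vd N \<longrightarrow>
      (closed_CT N conj \<longleftrightarrow> closed_CT_d N (Pc_N vd N) conj))"
  apply (intro conjI impI; (elim conjE)?)
  apply (rule p1[OF logic]; assumption)
  apply (rule p2[OF logic]; assumption)
  apply (rule p3[OF logic]; assumption)
  apply (rule p4[OF logic]; assumption)
  apply (rule p5[OF logic])
  apply (rule p6; assumption)
  apply (rule p7[OF logic]; assumption)
  apply (rule p8[OF logic]; assumption)
  apply (rule p9[OF logic]; assumption)
  apply (rule p10[OF logic]; assumption)
  apply (rule p11[OF logic]; assumption)
  apply (rule p12; assumption)
  apply (rule p13[OF logic]; assumption)
  done

end
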